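(* For every integer $d\ge 2$, $\mathcal Q_d$ is dense in $\mathcal C_d$.
   Context: A polynomial knot is a map $\phi:\mathbb R\to\mathbb R^3$ with real polynomial components which is a smooth embedding ($\phi$ injective and $\phi'(t)\ne0$ for all $t$). For $d\ge2$, $\mathcal A_d$ is the set of polynomial maps $t\mapsto(f(t),g(t),h(t))$ with $\deg f\le d-2$, $\deg g\le d-1$, $\deg h\le d$, topologized via the bijection with Euclidean $\mathbb R^{3d}$ sending $(f,g,h)$ to its coefficient vector $(a_0,\dots,a_{d-2},b_0,\dots,b_{d-1},c_0,\dots,c_d)$, where $f=\sum a_it^i$, $g=\sum b_it^i$, $h=\sum c_it^i$. $\mathcal C_d\subseteq\mathcal A_d$ is the subspace of maps with $\deg f=d-2$, $\deg g=d-1$, $\deg h=d$ exactly, and $\mathcal Q_d$ is the set of polynomial knots in $\mathcal C_d$. *)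

theory Defs
  imports "HOL-Analysis.Analysis" "HOL-Computational_Algebra.Polynomial"
begin

type_synonym pmap = "real poly \<times> real poly \<times> real poly"

definition pcurve :: "pmap \<Rightarrow> real \<Rightarrow> real \<times> real \<times> real" where
  "pcurve \<phi> t = (case \<phi> of (f, g, h) \<Rightarrow> (poly f t, poly g t, poly h t))"

definition poly_knot :: "pmap \<Rightarrow> bool" where
  "poly_knot \<phi> = (case \<phi> of (f, g, h) \<Rightarrow>
      inj (pcurve \<phi>) \<and>
      (\<forall>t. (poly (pderiv f) t, poly (pderiv g) t, poly (pderiv h) t) \<noteq> (0, 0, 0)))"

definition A_space :: "nat \<Rightarrow> pmap set" where
  "A_space d = {(f, g, h). degree f \<le> d - 2 \<and> degree g \<le> d - 1 \<and> degree h \<le> d}"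

text \<open>Exact degrees; a polynomial of exact degree 0 is a nonzero constant.\<close>
definition C_space :: "nat \<Rightarrow> pmap set" where
  "C_space d = {(f, g, h). f \<noteq> 0 \<and> g \<noteq> 0 \<and> h \<noteq> 0 \<and>
       degree f = d - 2 \<and> degree g = d - 1 \<and> degree h = d}"

definition Q_space :: "nat \<Rightarrow> pmap set" where
  "Q_space d = {\<phi> \<in> C_space d. poly_knot \<phi>}"

text \<open>Euclidean distance of coefficient vectors in R^(3d) (coefficients beyond the
  degree bounds vanish on A_d, so summing up to d is harmless).\<close>
definition coeff_dist :: "nat \<Rightarrow> pmap \<Rightarrow> pmap \<Rightarrow> real" where
  "coeff_dist d \<phi> \<psi> = (case \<phi> of (f, g, h) \<Rightarrow> case \<psi> of (f', g', h') \<Rightarrow>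
      sqrt ((\<Sum>i\<le>d-2. (coeff f i - coeff f' i)^2) + (\<Sum>i\<le>d-1. (coeff g i - coeff g' i)^2)
          + (\<Sum>i\<le>d. (coeff h i - coeff h' i)^2)))"

end

theory Submission
  imports Defs
begin

lemma deg1: fixes p :: "real poly" assumes "degree p = 1"
  shows "inj (poly p) \<and> (\<forall>t. poly (pderiv p) t \<noteq> 0)"
proof -
  have p: "p = [:coeff p 0, coeff p 1:]"
    using assms by (auto simp: poly_eq_iff coeff_pCons coeff_eq_0 split: nat.split)
  have c: "coeff p 1 \<noteq> 0" using assms by (metis leading_coeff_0_iff one_neq_zero degree_0)
  have "poly p = (\<lambda>t. coeff p 0 + t * coeff p 1)" by (subst p) (auto simp: fun_eq_iff)
  moreover have "pderiv p = [:coeff p 1:]" by (subst p) (simp add: pderiv_pCons)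
  ultimately show ?thesis using c by (auto simp: inj_on_def)
qed

definition dd :: "real poly \<Rightarrow> real \<times> real \<Rightarrow> real" where
  "dd p x = (poly p (fst x) - poly p (snd x)) / (fst x - snd x)"

lemma dd_diff: "(\<lambda>x. (dd f x, dd g x, dd h x)) differentiable_on {x. fst x \<noteq> snd x}"
proof -
  have P: "(\<lambda>x. poly p (fst x)) differentiable (at x)" "(\<lambda>x. poly p (snd x)) differentiable (at x)" for p and x :: "real\<times>real"
  proof -
    have D: "poly p differentiable (at y)" for y
      using poly_DERIV[of p y] by (auto simp: differentiable_def has_field_derivative_def)
    show "(\<lambda>x. poly p (fst x)) differentiable (at x)"
      using differentiable_compose[of "poly p" fst x UNIV] D bounded_linear_imp_differentiable[OF bounded_linear_fst] by blast
    show "(\<lambda>x. poly p (snd x)) differentiable (at x)"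
      using differentiable_compose[of "poly p" snd x UNIV] D bounded_linear_imp_differentiable[OF bounded_linear_snd] by blast
  qed
  show ?thesis unfolding dd_def differentiable_on_def
  proof (intro ballI, rule differentiable_at_withinI)
    fix x :: "real \<times> real" assume "x \<in> {x. fst x \<noteq> snd x}"
    then show "(\<lambda>x. ((poly f (fst x) - poly f (snd x)) / (fst x - snd x),
       (poly g (fst x) - poly g (snd x)) / (fst x - snd x),
       (poly h (fst x) - poly h (snd x)) / (fst x - snd x))) differentiable at x"
    proof -
      have ne: "fst x - snd x \<noteq> 0" using \<open>x \<in> {x. fst x \<noteq> snd x}\<close> by simp
      have F: "(\<lambda>x::real\<times>real. fst x) differentiable at x" "(\<lambda>x::real\<times>real. snd x) differentiable at x"
        using bounded_linear_imp_differentiable[OF bounded_linear_fst]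
              bounded_linear_imp_differentiable[OF bounded_linear_snd] by auto
      have S: "(\<lambda>x. fst x - snd x) differentiable at x"
        by (rule differentiable_diff[OF F])
      have Q: "(\<lambda>x. (poly p (fst x) - poly p (snd x)) / (fst x - snd x)) differentiable at x" for p
        by (rule differentiable_divide[OF differentiable_diff[OF P(1) P(2)] S ne])
      show ?thesis by (rule differentiable_Pair[OF Q differentiable_Pair[OF Q Q]])
    qed
  qed
qed

lemma negl_dd: "negligible ((\<lambda>x. (dd f x, dd g x, dd h x)) ` {x. fst x \<noteq> snd x})"
  by (rule negligible_differentiable_image_lowdim[OF _ dd_diff]) simp

lemma negl_der: "negligible ((\<lambda>t::real. (poly (pderiv f) t, poly (pderiv g) t, poly (pderiv h) t)) ` UNIV)"
  by (rule negligible_differentiable_image_lowdim) (auto simp: differentiable_on_def intro!: derivative_intros)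

definition pert :: "real poly \<Rightarrow> real \<Rightarrow> real poly" where
  "pert p a = p - [:0, a:]"

lemma pert_degree: assumes "degree p \<ge> 2" shows "degree (pert p a) = degree p"
proof -
  have eq: "p - [:0, a:] = p + [:0, -a:]" by (simp add: poly_eq_iff coeff_pCons split: nat.split)
  have "degree [:0, -a:] \<le> 1" by (simp add: degree_pCons_eq_if)
  then have "degree [:0, -a:] < degree p" using assms by simp
  then show ?thesis unfolding pert_def eq by (rule degree_add_eq_left)
qed

lemma pert_poly: "poly (pert p a) t = poly p t - a * t"
  by (simp add: pert_def)

lemma pert_pderiv: "poly (pderiv (pert p a)) t = poly (pderiv p) t - a"
  by (simp add: pert_def pderiv_diff pderiv_pCons)

lemma pert_coeff: "coeff (pert p a) i = coeff p i - (if i = 1 then a else 0)"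
  by (simp add: pert_def coeff_pCons split: nat.split)

lemma pert_sum: assumes "n \<ge> 1"
  shows "(\<Sum>i\<le>n. (coeff p i - coeff (pert p a) i)^2) = a^2"
proof -
  have "(\<Sum>i\<le>n. (coeff p i - coeff (pert p a) i)^2) = (\<Sum>i\<le>n. if i = 1 then a^2 else 0)"
    by (intro sum.cong) (auto simp: pert_coeff)
  also have "\<dots> = a^2" using assms by (simp add: sum.delta)
  finally show ?thesis .
qed

lemma knot_deg1:
  assumes "degree f = 1 \<or> degree g = 1"
  shows "poly_knot (f, g, h)"
proof -
  have "inj (pcurve (f, g, h))"
  proof (rule injI)
    fix s t assume "pcurve (f, g, h) s = pcurve (f, g, h) t"
    then have "poly f s = poly f t" "poly g s = poly g t" by (auto simp: pcurve_def)
    then show "s = t" using assms deg1[of f] deg1[of g] by (auto dest: injD)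
  qed
  moreover have "(poly (pderiv f) t, poly (pderiv g) t, poly (pderiv h) t) \<noteq> (0, 0, 0)" for t
    using assms deg1[of f] deg1[of g] by auto
  ultimately show ?thesis by (simp add: poly_knot_def)
qed

theorem mainTheorem12:
  fixes d :: nat
  assumes "d \<ge> 2"
  shows "\<forall>\<phi>\<in>C_space d. \<forall>\<epsilon>>0. \<exists>\<psi>\<in>Q_space d. coeff_dist d \<phi> \<psi> < \<epsilon>"
proof (intro ballI allI impI)
  fix \<phi> and \<epsilon> :: real
  assume \<phi>: "\<phi> \<in> C_space d" and e: "\<epsilon> > 0"
  obtain f g h where fgh: "\<phi> = (f, g, h)" by (cases \<phi>) auto
  have C: "f \<noteq> 0" "g \<noteq> 0" "h \<noteq> 0" "degree f = d - 2" "degree g = d - 1" "degree h = d"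
    using \<phi> fgh by (auto simp: C_space_def)
  have dist0: "coeff_dist d \<phi> \<phi> = 0" by (simp add: fgh coeff_dist_def)
  show "\<exists>\<psi>\<in>Q_space d. coeff_dist d \<phi> \<psi> < \<epsilon>"
  proof (cases "d \<le> 3")
    case True
    then have "degree f = 1 \<or> degree g = 1" using C assms by auto
    then have "\<phi> \<in> Q_space d" using \<phi> knot_deg1 fgh by (simp add: Q_space_def)
    then show ?thesis using dist0 e by (intro bexI[of _ \<phi>]) auto
  next
    case False
    let ?N = "(\<lambda>x. (dd f x, dd g x, dd h x)) ` {x. fst x \<noteq> snd x} \<union>
              (\<lambda>t::real. (poly (pderiv f) t, poly (pderiv g) t, poly (pderiv h) t)) ` UNIV"
    have nN: "negligible ?N" using negl_dd negl_der by simp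
    have nB: "\<not> negligible (ball (0::real\<times>real\<times>real) \<epsilon>)"
      using open_not_negligible[of "ball (0::real\<times>real\<times>real) \<epsilon>"] e by simp
    have "\<not> ball 0 \<epsilon> \<subseteq> ?N"
    proof
      assume "ball 0 \<epsilon> \<subseteq> ?N"
      with nN have "negligible (ball (0::real\<times>real\<times>real) \<epsilon>)" by (rule negligible_subset)
      with nB show False by contradiction
    qed
    then obtain v where v: "v \<in> ball 0 \<epsilon>" "v \<notin> ?N"
      by (auto simp only: subset_iff)
    obtain a b c where abc: "v = (a, b, c)" by (cases v) auto
    define \<psi> where "\<psi> = (pert f a, pert g b, pert h c)"
    have dg: "degree (pert f a) = d - 2" "degree (pert g b) = d - 1" "degree (pert h c) = d"
      using C False pert_degree by auto
    have nz: "pert f a \<noteq> 0" "pert g b \<noteq> 0" "pert h c \<noteq> 0"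
    proof -
      have d2: "d - 2 \<noteq> 0" "d - 1 \<noteq> 0" "d \<noteq> 0" using False by auto
      show "pert f a \<noteq> 0" "pert g b \<noteq> 0" "pert h c \<noteq> 0"
        using dg d2 by (metis degree_0)+
    qed
    have inj: "inj (pcurve \<psi>)"
    proof (rule injI, rule ccontr)
      fix s t assume eq: "pcurve \<psi> s = pcurve \<psi> t" and st: "s \<noteq> t"
      have e1: "poly f s - a * s = poly f t - a * t" "poly g s - b * s = poly g t - b * t"
        "poly h s - c * s = poly h t - c * t"
        using eq by (auto simp: \<psi>_def pcurve_def pert_poly)
      have "dd p (s, t) = k" if "poly p s - k * s = poly p t - k * t" for p k
      proof -
        have "poly p s - poly p t = k * (s - t)" using that by (simp add: algebra_simps)
        then show ?thesis using st by (simp add: dd_def)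
      qed
      then have "v = (\<lambda>x. (dd f x, dd g x, dd h x)) (s,t)" using e1 abc by simp
      moreover have "(s, t) \<in> {x. fst x \<noteq> snd x}" using st by simp
      ultimately have "v \<in> (\<lambda>x. (dd f x, dd g x, dd h x)) ` {x. fst x \<noteq> snd x}"
        by (rule image_eqI)
      then show False using v(2) UnI1 UnI2 by fast
    qed
    have der: "(poly (pderiv (pert f a)) t, poly (pderiv (pert g b)) t, poly (pderiv (pert h c)) t) \<noteq> (0, 0, 0)" for t
    proof
      assume "(poly (pderiv (pert f a)) t, poly (pderiv (pert g b)) t, poly (pderiv (pert h c)) t) = (0, 0, 0)"
      then have "v = (\<lambda>t::real. (poly (pderiv f) t, poly (pderiv g) t, poly (pderiv h) t)) t"
        using abc by (simp add: pert_pderiv)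
      then have "v \<in> (\<lambda>t::real. (poly (pderiv f) t, poly (pderiv g) t, poly (pderiv h) t)) ` UNIV"
        by (rule image_eqI) simp
      then show False using v(2) UnI1 UnI2 by fast
    qed
    have "\<psi> \<in> Q_space d"
      using dg nz inj der by (simp add: Q_space_def C_space_def poly_knot_def \<psi>_def)
    moreover have "coeff_dist d \<phi> \<psi> = norm v"
      using False by (simp add: fgh \<psi>_def coeff_dist_def pert_sum abc norm_Pair)
    moreover have "norm v < \<epsilon>" using v(1) by simp
    ultimately show ?thesis by (intro bexI[of _ \<psi>]) simp_all
  qed
qed

end
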